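(* For all $\delta_1,\delta_2\in\mathcal{D}^{LSL}$ and every $t\in[0,1]$, $$(\delta_1\ast\delta_2)(t)\le \min\{\delta_1(t),\delta_2(t)\}.$$
   Context: $\lambda$ denotes Lebesgue measure on $[0,1]$. Let $\mathcal{D}$ be the set of all functions $\delta:[0,1]\to[0,1]$ with $\delta(u)\le u$ for all $u$, $\delta(1)=1$, $\delta$ non-decreasing, and $|\delta(v)-\delta(u)|\le 2|v-u|$ for all $u,v$. Let $\mathcal{D}^{LSL}$ be the set of $\delta\in\mathcal{D}$ such that $x\mapsto \delta(x)/x$ is non-decreasing on $(0,1]$ and $x\mapsto \delta(x)/x^2$ is non-increasing on $(0,1]$. For $\delta_1,\delta_2\in\mathcal{D}^{LSL}$ the star product $\delta_1\ast\delta_2:[0,1]\to[0,1]$ is defined by $(\delta_1\ast\delta_2)(0):=0$ and, for $x\in(0,1]$, $$(\delta_1\ast\delta_2)(x):=\frac{1}{x}\delta_1(x)\delta_2(x)+x^2\int_{[x,1]}\left(\tfrac{\delta_1(u)}{u}\right)'\left(\tfrac{\delta_2(u)}{u}\right)'\,d\lambda(u),$$ where the derivatives exist $\lambda$-almost everywhere. *)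

theory Defs
  imports "HOL-Analysis.Analysis"
begin

text \<open>The class D: functions on [0,1] (values outside [0,1] are irrelevant).\<close>
definition Dcl :: "(real \<Rightarrow> real) set" where
  "Dcl = {\<delta>. (\<forall>u\<in>{0..1}. 0 \<le> \<delta> u \<and> \<delta> u \<le> 1 \<and> \<delta> u \<le> u)
            \<and> \<delta> 1 = 1
            \<and> mono_on {0..1} \<delta>
            \<and> (\<forall>u\<in>{0..1}. \<forall>v\<in>{0..1}. \<bar>\<delta> v - \<delta> u\<bar> \<le> 2 * \<bar>v - u\<bar>)}"

definition Dlsl :: "(real \<Rightarrow> real) set" where
  "Dlsl = {\<delta>. \<delta> \<in> Dcl
            \<and> (\<forall>x\<in>{0<..1}. \<forall>y\<in>{0<..1}. x \<le> y \<longrightarrow> \<delta> x / x \<le> \<delta> y / y)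
            \<and> (\<forall>x\<in>{0<..1}. \<forall>y\<in>{0<..1}. x \<le> y \<longrightarrow> \<delta> y / y^2 \<le> \<delta> x / x^2)}"

text \<open>Derivative of u \<mapsto> \<delta>(u)/u where it exists (0 elsewhere; a null set).\<close>
definition dq :: "(real \<Rightarrow> real) \<Rightarrow> real \<Rightarrow> real" where
  "dq \<delta> u = (if (\<lambda>v. \<delta> v / v) differentiable (at u) then deriv (\<lambda>v. \<delta> v / v) u else 0)"

definition star :: "(real \<Rightarrow> real) \<Rightarrow> (real \<Rightarrow> real) \<Rightarrow> real \<Rightarrow> real" where
  "star \<delta>1 \<delta>2 x = (if x = 0 then 0 else
      \<delta>1 x * \<delta>2 x / x + x^2 * (LINT u:{x..1}|lebesgue. dq \<delta>1 u * dq \<delta>2 u))"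

end

theory Submission
  imports Defs
begin

definition Fc :: "(real \<Rightarrow> real) \<Rightarrow> real \<Rightarrow> real \<Rightarrow> real" where
  "Fc \<delta> x v = \<delta> (max x (min v 1)) / max x (min v 1)"

lemma Dlsl_props:
  assumes "\<delta> \<in> Dlsl"
  shows "\<And>u. u \<in> {0..1} \<Longrightarrow> 0 \<le> \<delta> u \<and> \<delta> u \<le> u"
    and "\<delta> 1 = 1"
    and "\<And>u v. u \<in> {0..1} \<Longrightarrow> v \<in> {0..1} \<Longrightarrow> \<bar>\<delta> v - \<delta> u\<bar> \<le> 2 * \<bar>v - u\<bar>"
    and "\<And>x y. 0 < x \<Longrightarrow> x \<le> y \<Longrightarrow> y \<le> 1 \<Longrightarrow> \<delta> x / x \<le> \<delta> y / y"
    and "\<And>x y. 0 < x \<Longrightarrow> x \<le> y \<Longrightarrow> y \<le> 1 \<Longrightarrow> \<delta> y / y^2 \<le> \<delta> x / x^2"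
  using assms unfolding Dlsl_def Dcl_def by auto

lemma delta_cont:
  assumes "\<delta> \<in> Dlsl"
  shows "continuous_on {0..1} \<delta>"
  unfolding continuous_on_iff
proof (intro ballI allI impI)
  fix u e assume u: "u \<in> {0..1::real}" and e: "(0::real) < e"
  show "\<exists>d>0. \<forall>x'\<in>{0..1}. dist x' u < d \<longrightarrow> dist (\<delta> x') (\<delta> u) < e"
  proof (intro exI[of _ "e/2"] conjI ballI impI)
    fix v assume v: "v \<in> {0..1::real}" and "dist v u < e/2"
    then have "\<bar>v - u\<bar> < e/2" by (simp add: dist_real_def)
    moreover have "\<bar>\<delta> v - \<delta> u\<bar> \<le> 2 * \<bar>v - u\<bar>" using Dlsl_props(3)[OF assms u v] .
    ultimately show "dist (\<delta> v) (\<delta> u) < e" by (simp add: dist_real_def)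
  qed (use e in auto)
qed

lemma Fc_cont:
  assumes "\<delta> \<in> Dlsl" "0 < x" "x \<le> 1"
  shows "continuous_on UNIV (Fc \<delta> x)"
proof -
  have c1: "continuous_on {x..1} (\<lambda>v. \<delta> v / v)"
    by (intro continuous_intros continuous_on_subset[OF delta_cont[OF assms(1)]]) (use assms in auto)
  have c2: "continuous_on UNIV (\<lambda>v. max x (min v 1))" by (intro continuous_intros)
  show ?thesis unfolding Fc_def
    by (rule continuous_on_compose2[OF c1 c2]) (use assms in auto)
qed

lemma Fc_mono:
  assumes "\<delta> \<in> Dlsl" "0 < x" "x \<le> 1" "a \<le> b"
  shows "Fc \<delta> x a \<le> Fc \<delta> x b"
  unfolding Fc_def
  by (rule Dlsl_props(4)[OF assms(1)]) (use assms in auto)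

lemma Fc_eq: "x \<le> v \<Longrightarrow> v \<le> 1 \<Longrightarrow> Fc \<delta> x v = \<delta> v / v"
  unfolding Fc_def by simp

lemma Fc_one: "\<delta> \<in> Dlsl \<Longrightarrow> x \<le> 1 \<Longrightarrow> 1 \<le> v \<Longrightarrow> Fc \<delta> x v = 1"
  unfolding Fc_def using Dlsl_props(2) by simp


lemma dq_bounds:
  assumes d: "\<delta> \<in> Dlsl" and x: "0 < x" and u: "x < u" "u < 1"
    and diff: "(\<lambda>v. \<delta> v / v) differentiable (at u)"
  shows "0 \<le> dq \<delta> u \<and> dq \<delta> u \<le> \<delta> x / x^2"
proof -
  let ?f = "\<lambda>v. \<delta> v / v"
  have D: "(?f has_real_derivative dq \<delta> u) (at u)"
    using diff unfolding dq_def by (simp add: DERIV_deriv_iff_real_differentiable)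
  have "((\<lambda>y. (?f y - ?f u) / (y - u)) \<longlongrightarrow> dq \<delta> u) (at u)"
    using has_field_derivativeD[OF D] .
  then have T: "((\<lambda>y. (?f y - ?f u) / (y - u)) \<longlongrightarrow> dq \<delta> u) (at_right u)"
    by (rule tendsto_mono[rotated]) (simp add: at_le)
  have ev: "eventually (\<lambda>y. 0 \<le> (?f y - ?f u) / (y - u) \<and> (?f y - ?f u) / (y - u) \<le> \<delta> x / x^2) (at_right u)"
  proof (rule eventually_at_rightI[OF _ u(2)])
    fix y assume y: "y \<in> {u<..<1}"
    have u0: "0 < u" using x u by auto
    have y0: "0 < y" using y u0 by auto
    have m1: "?f u \<le> ?f y" using Dlsl_props(4)[OF d u0, of y] y by auto
    have m2: "\<delta> y / y^2 \<le> \<delta> u / u^2" using Dlsl_props(5)[OF d u0, of y] y by auto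
    have m3: "\<delta> u / u^2 \<le> \<delta> x / x^2" using Dlsl_props(5)[OF d x, of u] u by auto
    have fy: "?f y = y * (\<delta> y / y^2)" using y0 by (simp add: power2_eq_square)
    have fu: "?f u = u * (\<delta> u / u^2)" using u0 by (simp add: power2_eq_square)
    have "?f y \<le> y * (\<delta> u / u^2)" unfolding fy using m2 y0 by (intro mult_left_mono) auto
    moreover have "(y - u) * (\<delta> u / u^2) = y * (\<delta> u / u^2) - u * (\<delta> u / u^2)"
      by (simp add: left_diff_distrib diff_divide_distrib)
    ultimately have "?f y - ?f u \<le> (y - u) * (\<delta> u / u^2)" using fu by linarith
    then have "(?f y - ?f u) / (y - u) \<le> \<delta> u / u^2" using y
      by (simp add: divide_le_eq mult.commute)
    moreover have "0 \<le> (?f y - ?f u) / (y - u)" using m1 y by simp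
    ultimately show "0 \<le> (?f y - ?f u) / (y - u) \<and> (?f y - ?f u) / (y - u) \<le> \<delta> x / x^2"
      using m3 by linarith
  qed
  have "0 \<le> dq \<delta> u"
    by (rule tendsto_lowerbound[OF T]) (use ev in \<open>auto elim: eventually_mono\<close>)
  moreover have "dq \<delta> u \<le> \<delta> x / x^2"
    by (rule tendsto_upperbound[OF T]) (use ev in \<open>auto elim: eventually_mono\<close>)
  ultimately show ?thesis by simp
qed

lemma dq_seq:
  assumes d: "\<delta> \<in> Dlsl" and x: "0 < x" and u: "x < u" "u < 1"
    and diff: "(\<lambda>v. \<delta> v / v) differentiable (at u)"
  shows "(\<lambda>n. (Fc \<delta> x (u + inverse (real (Suc n))) - Fc \<delta> x u) / inverse (real (Suc n)))
           \<longlonglongrightarrow> dq \<delta> u"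
proof -
  let ?f = "\<lambda>v. \<delta> v / v"
  let ?r = "\<lambda>n. inverse (real (Suc n))"
  have D: "(?f has_real_derivative dq \<delta> u) (at u)"
    using diff unfolding dq_def by (simp add: DERIV_deriv_iff_real_differentiable)
  have L: "((\<lambda>h. (?f (u + h) - ?f u) / h) \<longlongrightarrow> dq \<delta> u) (at 0)"
    using DERIV_D[OF D] .
  have r: "filterlim ?r (at 0) sequentially"
    by (rule filterlim_atI[OF LIMSEQ_inverse_real_of_nat]) simp
  have T: "(\<lambda>n. (?f (u + ?r n) - ?f u) / ?r n) \<longlonglongrightarrow> dq \<delta> u"
    using filterlim_compose[OF L r] .
  have "eventually (\<lambda>n. ?r n < 1 - u) sequentially"
    using order_tendstoD(2)[OF LIMSEQ_inverse_real_of_nat, of "1 - u"] u by simp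
  then have "eventually (\<lambda>n. (?f (u + ?r n) - ?f u) / ?r n =
      (Fc \<delta> x (u + ?r n) - Fc \<delta> x u) / ?r n) sequentially"
  proof (rule eventually_mono)
    fix n assume "?r n < 1 - u"
    moreover have "0 < ?r n" by simp
    ultimately have a: "x \<le> u + ?r n" "u + ?r n \<le> 1" using u by linarith+
    show "(?f (u + ?r n) - ?f u) / ?r n = (Fc \<delta> x (u + ?r n) - Fc \<delta> x u) / ?r n"
      using u x Fc_eq[OF a] Fc_eq[of x u] by simp
  qed
  from Lim_transform_eventually[OF T this] show ?thesis .
qed


lemma h_integral:
  assumes d: "\<delta> \<in> Dlsl" and x: "0 < x" "x \<le> 1" and r: "0 < r" "r \<le> 1"
  shows "(\<lambda>u. (Fc \<delta> x (u + r) - Fc \<delta> x u) / r) integrable_on {x..1}"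
    and "integral {x..1} (\<lambda>u. (Fc \<delta> x (u + r) - Fc \<delta> x u) / r) \<le> 1 - \<delta> x / x"
proof -
  let ?F = "Fc \<delta> x"
  define a where "a = x - 1"
  define G where "G v = integral {a..v} ?F" for v
  define H where "H u = (G (u + r) - G u) / r" for u
  have cont: "continuous_on UNIV ?F" using Fc_cont[OF d x] .
  have intF: "?F integrable_on {p..q}" for p q
    by (rule integrable_continuous_real[OF continuous_on_subset[OF cont]]) simp
  have DG: "(G has_real_derivative ?F t) (at t)" if "a < t" "t < 4" for t
  proof -
    have "(G has_real_derivative ?F t) (at t within {a..4})"
      unfolding G_def
      by (rule integral_has_real_derivative[OF continuous_on_subset[OF cont]]) (use that in auto)
    then show ?thesis using at_within_Icc_at[OF that] by simp
  qed
  have DH: "(H has_real_derivative (?F (u + r) - ?F u) / r) (at u)" if "u \<in> {x..1}" for u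
  proof -
    have "((\<lambda>u. G (u + r)) has_real_derivative ?F (u + r) * 1) (at u)"
      by (rule DERIV_chain2[OF DG]) (use that r a_def x in \<open>auto intro!: derivative_eq_intros\<close>)
    moreover have "(G has_real_derivative ?F u) (at u)"
      by (rule DG) (use that r a_def x in auto)
    ultimately show ?thesis unfolding H_def
      using r by (auto intro!: derivative_eq_intros)
  qed
  have hi: "((\<lambda>u. (?F (u + r) - ?F u) / r) has_integral (H 1 - H x)) {x..1}"
    by (rule fundamental_theorem_of_calculus[OF x(2)])
       (use DH in \<open>auto simp: has_real_derivative_iff_has_vector_derivative[symmetric]
          intro: has_field_derivative_at_within\<close>)
  then show "(\<lambda>u. (?F (u + r) - ?F u) / r) integrable_on {x..1}" by blast
  have c1: "G (1 + r) - G 1 = integral {1..1+r} ?F"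
    using Henstock_Kurzweil_Integration.integral_combine[where a=a and c=1 and b="1 + r" and f="?F"] intF a_def x r unfolding G_def by auto
  have c2: "G (x + r) - G x = integral {x..x+r} ?F"
    using Henstock_Kurzweil_Integration.integral_combine[where a=a and c=x and b="x + r" and f="?F"] intF a_def x r unfolding G_def by auto
  have i1: "integral {1..1+r} ?F = r"
  proof -
    have "integral {1..1+r} ?F = integral {1..1+r} (\<lambda>_. 1::real)"
      by (rule integral_cong) (use Fc_one[OF d x(2)] in auto)
    then show ?thesis using r by simp
  qed
  have i2: "r * (\<delta> x / x) \<le> integral {x..x+r} ?F"
  proof -
    have "integral {x..x+r} (\<lambda>_. ?F x) \<le> integral {x..x+r} ?F"
      by (rule integral_le[OF _ intF]) (use Fc_mono[OF d x] in auto)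
    then show ?thesis using r Fc_eq[of x x \<delta>] x by simp
  qed
  have "integral {x..1} (\<lambda>u. (?F (u + r) - ?F u) / r) = H 1 - H x"
    using hi by (rule integral_unique)
  also have "\<dots> = (r - integral {x..x+r} ?F) / r"
    unfolding H_def using c1 c2 i1 by (simp add: diff_divide_distrib)
  also have "\<dots> \<le> (r - r * (\<delta> x / x)) / r"
    using i2 r by (intro divide_right_mono) auto
  also have "\<dots> = 1 - \<delta> x / x" using r by (simp add: field_simps)
  finally show "integral {x..1} (\<lambda>u. (?F (u + r) - ?F u) / r) \<le> 1 - \<delta> x / x" .
qed


lemma key:
  assumes d1: "\<delta>1 \<in> Dlsl" and d2: "\<delta>2 \<in> Dlsl" and x: "0 < x" "x \<le> 1"
    and ai: "(\<lambda>u. dq \<delta>1 u * dq \<delta>2 u) absolutely_integrable_on {x..1}"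
  shows "integral {x..1} (\<lambda>u. dq \<delta>1 u * dq \<delta>2 u) \<le> \<delta>1 x / x^2 * (1 - \<delta>2 x / x)"
proof -
  define g where "g u = dq \<delta>1 u * dq \<delta>2 u" for u
  define c where "c = \<delta>1 x / x^2"
  define r where "r n = inverse (real (Suc n))" for n
  define h where "h n u = (Fc \<delta>2 x (u + r n) - Fc \<delta>2 x u) / r n" for n u
  define m where "m n u = (if u \<in> {x<..<1} then min (g u) (c * h n u) else g u)" for n u
  have r0: "0 < r n" "r n \<le> 1" for n unfolding r_def by (auto simp: field_simps)
  have c0: "0 \<le> c" unfolding c_def using Dlsl_props(1)[OF d1, of x] x by auto
  have hnn: "0 \<le> h n u" for n u
    unfolding h_def using Fc_mono[OF d2 x, of u "u + r n"] r0[of n] by auto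
  have ai': "g absolutely_integrable_on {x..1}" using ai unfolding g_def by simp
  have gint: "g integrable_on {x..1}" using set_lebesgue_integral_eq_integral(1)[OF ai'] .
  have hcont: "continuous_on {x..1} (h n)" for n
  proof -
    have "continuous_on {x..1} (\<lambda>u. Fc \<delta>2 x (u + r n))"
      by (rule continuous_on_compose2[OF Fc_cont[OF d2 x]]) (auto intro: continuous_intros)
    moreover have "continuous_on {x..1} (Fc \<delta>2 x)"
      using continuous_on_subset[OF Fc_cont[OF d2 x]] by blast
    ultimately show ?thesis unfolding h_def by (intro continuous_intros) (use r0[of n] in auto)
  qed
  have minint: "(\<lambda>u. min (g u) (c * h n u)) integrable_on {x..1}" for n
  proof -
    have "(\<lambda>u. c * h n u) absolutely_integrable_on {x..1}"
      by (rule absolutely_integrable_continuous_real) (intro continuous_intros hcont)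
    from absolutely_integrable_min_1[OF ai' this] show ?thesis
      using set_lebesgue_integral_eq_integral(1) by blast
  qed
  have negl: "negligible {x, 1::real}" by simp
  have meq: "\<And>u. u \<in> {x..1} - {x, 1} \<Longrightarrow> m n u = min (g u) (c * h n u)" for n
    unfolding m_def by auto
  have mint: "m n integrable_on {x..1}" for n
    by (rule integrable_spike[OF minint negl]) (use meq in auto)
  have mint_eq: "integral {x..1} (m n) = integral {x..1} (\<lambda>u. min (g u) (c * h n u))" for n
    by (rule integral_spike[OF negl]) (use meq in auto)
  have hint: "h n integrable_on {x..1}" and hle: "integral {x..1} (h n) \<le> 1 - \<delta>2 x / x" for n
    using h_integral[OF d2 x r0[of n]] unfolding h_def by auto
  have gpt: "0 \<le> g u \<and> (\<forall>n. 0 \<le> min (g u) (c * h n u)) \<and> (\<lambda>n. min (g u) (c * h n u)) \<longlonglongrightarrow> g u"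
    if u: "u \<in> {x<..<1}" for u
  proof (cases "(\<lambda>v. \<delta>1 v / v) differentiable (at u) \<and> (\<lambda>v. \<delta>2 v / v) differentiable (at u)")
    case True
    have b1: "0 \<le> dq \<delta>1 u \<and> dq \<delta>1 u \<le> c"
      using dq_bounds[OF d1 x(1)] u True unfolding c_def by auto
    have b2: "0 \<le> dq \<delta>2 u"
      using dq_bounds[OF d2 x(1)] u True by auto
    have g0: "0 \<le> g u" unfolding g_def using b1 b2 by simp
    have gle: "g u \<le> c * dq \<delta>2 u" unfolding g_def using b1 b2 by (simp add: mult_right_mono)
    have "(\<lambda>n. h n u) \<longlonglongrightarrow> dq \<delta>2 u"
      unfolding h_def r_def using dq_seq[OF d2 x(1)] u True by auto
    then have "(\<lambda>n. min (g u) (c * h n u)) \<longlonglongrightarrow> min (g u) (c * dq \<delta>2 u)"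
      by (intro tendsto_intros)
    moreover have "min (g u) (c * dq \<delta>2 u) = g u" using gle by simp
    ultimately show ?thesis using g0 c0 hnn by auto
  next
    case False
    then have "g u = 0" unfolding g_def dq_def by auto
    moreover have "min 0 (c * h n u) = 0" for n using c0 hnn[of n u] by simp
    ultimately show ?thesis by simp
  qed
  have conv: "(\<lambda>n. integral {x..1} (m n)) \<longlonglongrightarrow> integral {x..1} g"
  proof (rule dominated_convergence(2)[OF mint, where h="\<lambda>u. norm (g u)"])
    show "(\<lambda>u. norm (g u)) integrable_on {x..1}"
      using ai' unfolding absolutely_integrable_on_def by simp
    show "norm (m n u) \<le> norm (g u)" if "u \<in> {x..1}" for n u
      using gpt[of u] unfolding m_def by auto
    show "(\<lambda>n. m n u) \<longlonglongrightarrow> g u" if "u \<in> {x..1}" for u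
      using gpt[of u] unfolding m_def by (cases "u \<in> {x<..<1}") auto
  qed
  have bnd: "integral {x..1} (m n) \<le> c * (1 - \<delta>2 x / x)" for n
  proof -
    have "integral {x..1} (m n) \<le> integral {x..1} (\<lambda>u. c * h n u)"
      unfolding mint_eq by (rule integral_le[OF minint]) (use integrable_cmul[OF hint[of n], of c] in auto)
    also have "\<dots> = c * integral {x..1} (h n)" by simp
    also have "\<dots> \<le> c * (1 - \<delta>2 x / x)" using hle c0 by (intro mult_left_mono) auto
    finally show ?thesis .
  qed
  have "integral {x..1} g \<le> c * (1 - \<delta>2 x / x)"
    by (rule tendsto_upperbound[OF conv]) (use bnd in auto)
  then show ?thesis unfolding g_def c_def by simp
qed


lemma star_le1:
  assumes d1: "\<delta>1 \<in> Dlsl" and d2: "\<delta>2 \<in> Dlsl" and t: "t \<in> {0..1::real}"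
  shows "star \<delta>1 \<delta>2 t \<le> \<delta>1 t"
proof (cases "t = 0")
  case True
  then show ?thesis unfolding star_def using Dlsl_props(1)[OF d1, of 0] by simp
next
  case False
  then have t0: "0 < t" "t \<le> 1" using t by auto
  have p1: "0 \<le> \<delta>1 t" "\<delta>1 t \<le> t" using Dlsl_props(1)[OF d1, of t] t by auto
  have p2: "0 \<le> \<delta>2 t" "\<delta>2 t \<le> t" using Dlsl_props(1)[OF d2, of t] t by auto
  let ?g = "\<lambda>u. dq \<delta>1 u * dq \<delta>2 u"
  let ?L = "LINT u:{t..1}|lebesgue. ?g u"
  have st: "star \<delta>1 \<delta>2 t = \<delta>1 t * \<delta>2 t / t + t^2 * ?L"
    unfolding star_def using False by simp
  have base: "\<delta>1 t * \<delta>2 t / t \<le> \<delta>1 t"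
  proof -
    have "\<delta>1 t * \<delta>2 t \<le> \<delta>1 t * t" using p1 p2 by (intro mult_left_mono) auto
    then show ?thesis using t0 by (simp add: divide_le_eq)
  qed
  show ?thesis
  proof (cases "set_integrable lebesgue {t..1} ?g")
    case True
    have "?L = integral {t..1} ?g" using set_lebesgue_integral_eq_integral(2)[OF True] .
    also have "\<dots> \<le> \<delta>1 t / t^2 * (1 - \<delta>2 t / t)" using key[OF d1 d2 t0 True] .
    finally have "t^2 * ?L \<le> t^2 * (\<delta>1 t / t^2 * (1 - \<delta>2 t / t))"
      by (intro mult_left_mono) auto
    also have "\<dots> = \<delta>1 t - \<delta>1 t * \<delta>2 t / t" using t0 by (simp add: field_simps power2_eq_square)
    finally show ?thesis using st by linarith
  next
    case False
    then have "?L = 0"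
      unfolding set_lebesgue_integral_def set_integrable_def by (rule not_integrable_integral_eq)
    then show ?thesis using st base by simp
  qed
qed

lemma star_comm: "star \<delta>1 \<delta>2 t = star \<delta>2 \<delta>1 t"
  unfolding star_def by (simp add: mult.commute)

theorem mainTheorem2:
  assumes "\<delta>1 \<in> Dlsl" and "\<delta>2 \<in> Dlsl" and "t \<in> {0..1::real}"
  shows "star \<delta>1 \<delta>2 t \<le> min (\<delta>1 t) (\<delta>2 t)"
  using star_le1[OF assms] star_le1[OF assms(2,1,3)] star_comm[of \<delta>1 \<delta>2 t] by simp

end
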